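(* Let $p$ be a prime and $f>1$ an integer, and let $l=f$ if $f$ is odd and $l=2f$ if $f$ is even. Define $\boldsymbol{\mu}=(\mu_0(x),\dots,\mu_{f-1}(x))$ by $\mu_0(x)=x-1$, $\mu_1(x)=p-2-x$, and $\mu_j(x)=p-1-x$ for $2\leq j\leq f-1$, and $\boldsymbol{\mu}^{(k)}=g^{k-1}\boldsymbol{\mu}\circ g^{k-2}\boldsymbol{\mu}\circ\cdots\circ g\boldsymbol{\mu}\circ\boldsymbol{\mu}$ for $1\leq k\leq l$. Then the $2l-1$ tuples $\boldsymbol{\mu}^{(1)},\boldsymbol{\mu}^{(2)},\dots,\boldsymbol{\mu}^{(l)},g\boldsymbol{\mu}^{(1)},g\boldsymbol{\mu}^{(2)},\dots,g\boldsymbol{\mu}^{(l-1)}$ are pairwise distinct elements of $(\mathbb{Z}\pm x)^f$.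
   Context: $(\mathbb{Z}\pm x)^f$ denotes the set of $f$-tuples $(\lambda_0(x),\dots,\lambda_{f-1}(x))$ of polynomials of the form $a\pm x$ with $a\in\mathbb{Z}$. Composition is componentwise: $\boldsymbol{\lambda}\circ\boldsymbol{\lambda}'=(\lambda_0(\lambda'_0(x)),\dots,\lambda_{f-1}(\lambda'_{f-1}(x)))$. The cyclic shift $g$ acts by $(g\boldsymbol{\lambda})_j=\lambda_{j+1}$, indices modulo $f$. *)

theory Defs
  imports "HOL-Computational_Algebra.Polynomial"
begin

definition pm_tuples :: "nat \<Rightarrow> int poly list set" where
  "pm_tuples f = {L. length L = f \<and> (\<forall>q\<in>set L. \<exists>a::int. q = [:a, 1:] \<or> q = [:a, -1:])}"

definition tcomp :: "int poly list \<Rightarrow> int poly list \<Rightarrow> int poly list" where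
  "tcomp L M = map2 pcompose L M"

text \<open>Cyclic shift g: (g lambda)_j = lambda_(j+1), indices mod f.\<close>
definition gshift :: "int poly list \<Rightarrow> int poly list" where
  "gshift L = rotate1 L"

definition mu :: "nat \<Rightarrow> nat \<Rightarrow> int poly list" where
  "mu p f = [[:-1, 1:], [:int p - 2, -1:]] @ replicate (f - 2) [:int p - 1, -1:]"

text \<open>mu^(k) = g^(k-1) mu o ... o g mu o mu, for k >= 1 (mu_pow p f 0 is mu^(1)).\<close>
fun mu_pow :: "nat \<Rightarrow> nat \<Rightarrow> nat \<Rightarrow> int poly list" where
  "mu_pow p f 0 = mu p f"
| "mu_pow p f (Suc k) = tcomp ((gshift ^^ Suc k) (mu p f)) (mu_pow p f k)"

definition mu_k :: "nat \<Rightarrow> nat \<Rightarrow> nat \<Rightarrow> int poly list" where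
  "mu_k p f k = mu_pow p f (k - 1)"

end

theory Submission imports Defs begin

definition mf :: "nat \<Rightarrow> nat \<Rightarrow> int \<Rightarrow> int" where
  "mf p i x = (if i = 0 then x - 1 else if i = 1 then int p - 2 - x else int p - 1 - x)"

fun W :: "nat \<Rightarrow> nat \<Rightarrow> nat \<Rightarrow> nat \<Rightarrow> int \<Rightarrow> int" where
  "W p f j 0 = id"
| "W p f j (Suc n) = mf p ((j + n) mod f) \<circ> W p f j n"

lemma W_split: "W p f j (a + b) = W p f ((j + a) mod f) b \<circ> W p f j a"
proof (induction b)
  case 0 then show ?case by simp
next
  case (Suc b)
  have "(j + (a + b)) mod f = ((j + a) mod f + b) mod f"
    by (simp add: mod_add_left_eq add.assoc)
  then show ?case using Suc by (simp add: comp_assoc)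
qed

lemma gshift_pow: "gshift ^^ n = rotate n"
  by (simp add: rotate_def gshift_def[abs_def])

lemma len_mu: "f > 1 \<Longrightarrow> length (mu p f) = f"
  by (simp add: mu_def)

lemma len_mu_pow: "f > 1 \<Longrightarrow> length (mu_pow p f k) = f"
  by (induction k) (simp_all add: len_mu tcomp_def gshift_pow)

lemma poly_mu: "f > 1 \<Longrightarrow> i < f \<Longrightarrow> poly (mu p f ! i) = mf p i"
  by (cases i) (auto simp: mu_def mf_def nth_append fun_eq_iff less_Suc_eq_0_disj)

lemma poly_mu_pow: "f > 1 \<Longrightarrow> j < f \<Longrightarrow> poly (mu_pow p f k ! j) = W p f j (Suc k)"
proof (induction k)
  case 0 then show ?case by (simp add: poly_mu)
next
  case (Suc k)
  have "mu_pow p f (Suc k) ! j = pcompose (mu p f ! ((j + Suc k) mod f)) (mu_pow p f k ! j)"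
  proof -
    have "rotate (Suc k) (mu p f) ! j = mu p f ! ((j + Suc k) mod f)"
      using Suc.prems nth_rotate[of j "mu p f" "Suc k"] by (simp add: len_mu del: rotate_Suc) (metis add.commute)
    then show ?thesis
      using Suc.prems by (simp add: tcomp_def gshift_pow len_mu len_mu_pow del: rotate_Suc)
  qed
  then show ?case using Suc by (simp add: poly_pcompose[abs_def] poly_mu fun_eq_iff)
qed

lemma W0_1: "f > 1 \<Longrightarrow> W p f 0 1 x = x - 1"
  by (simp add: mf_def)

lemma W0_mid: "f > 1 \<Longrightarrow> 2 \<le> n \<Longrightarrow> n \<le> f \<Longrightarrow> W p f 0 n x = (if even n then int p - 1 - x else x)"
proof (induction n)
  case 0 then show ?case by simp
next
  case (Suc n)
  show ?case
  proof (cases "n = 1")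
    case True then show ?thesis using Suc.prems by (simp add: mf_def)
  next
    case False
    then have "2 \<le> n" using Suc.prems by simp
    then show ?thesis using Suc by (simp add: mf_def)
  qed
qed

lemma W0_f1: "f > 1 \<Longrightarrow> W p f 0 (f + 1) x = (if even f then int p - 2 - x else x - 1)"
  using W0_mid[of f f p x] by (simp add: mf_def)

lemma W0_hi: "f > 1 \<Longrightarrow> even f \<Longrightarrow> 2 \<le> m \<Longrightarrow> m \<le> f \<Longrightarrow> W p f 0 (f + m) x = (if even m then x else int p - 1 - x)"
  using W_split[of p f 0 f m] W0_mid[of f f p x] W0_mid[of f m p] by simp

lemma W1_lo: "f > 1 \<Longrightarrow> 1 \<le> n \<Longrightarrow> n \<le> f - 1 \<Longrightarrow> W p f 1 n x = (if odd n then int p - 2 - x else x + 1)"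
proof (induction n)
  case 0 then show ?case by simp
next
  case (Suc n)
  show ?case
  proof (cases "n = 0")
    case True then show ?thesis using Suc.prems by (simp add: mf_def)
  next
    case False
    then have "Suc n mod f = Suc n" using Suc.prems by simp
    then show ?thesis using Suc False by (simp add: mf_def)
  qed
qed

lemma W1_f: "f > 1 \<Longrightarrow> W p f 1 f x = (if even f then int p - 3 - x else x)"
proof -
  assume f: "f > 1"
  have "W p f 1 f = W p f 1 (Suc (f - 1))" using f by simp
  also have "\<dots> = mf p ((1 + (f - 1)) mod f) \<circ> W p f 1 (f - 1)" by simp
  also have "(1 + (f - 1)) mod f = 0" using f by simp
  finally show ?thesis using f W1_lo[of f "f - 1" p x] by (auto simp: mf_def)
qed

lemma W1_hi: "f > 1 \<Longrightarrow> even f \<Longrightarrow> 1 \<le> m \<Longrightarrow> m \<le> f - 1 \<Longrightarrow> W p f 1 (f + m) x = (if odd m then x + 1 else int p - 2 - x)"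
proof -
  assume a: "f > 1" "even f" "1 \<le> m" "m \<le> f - 1"
  have "(1 + f) mod f = 1" using a by (simp add: mod_Suc)
  then show ?thesis using a W_split[of p f 1 f m] W1_f[of f p x] W1_lo[of f m p] by (simp add: mf_def)
qed

lemma W2_lo: "f \<ge> 3 \<Longrightarrow> n \<le> f - 2 \<Longrightarrow> W p f 2 n x = (if even n then x else int p - 1 - x)"
proof (induction n)
  case 0 then show ?case by simp
next
  case (Suc n)
  then have "(2 + n) mod f = 2 + n" by simp
  then show ?case using Suc by (simp add: mf_def)
qed

lemma W2_hi: "f \<ge> 3 \<Longrightarrow> W p f 2 (f - 2 + m) x = W p f 0 m (if even f then x else int p - 1 - x)"
proof -
  assume a: "f \<ge> 3"
  have "2 + (f - 2) = f" using a by simp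
  then have "(2 + (f - 2)) mod f = 0" by simp
  then show ?thesis using a W_split[of p f 2 "f - 2" m] W2_lo[of f "f - 2" p x] by simp
qed

lemma W0_vals:
  assumes f: "f > 1" and k: "1 \<le> k" "k \<le> (if odd f then f else 2 * f)"
  shows "(W p f 0 k 0 = -1 \<and> W p f 0 k 1 = 0) \<or> (W p f 0 k 0 = int p - 1 \<and> W p f 0 k 1 = int p - 2)
    \<or> (W p f 0 k 0 = 0 \<and> W p f 0 k 1 = 1) \<or> (k = f + 1 \<and> W p f 0 k 0 = int p - 2 \<and> W p f 0 k 1 = int p - 3)"
proof -
  consider "k = 1" | "2 \<le> k \<and> k \<le> f" | "k = f + 1" | "f + 2 \<le> k" using k by linarith
  then show ?thesis
  proof cases
    case 1 then show ?thesis using f W0_1[of f p] by simp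
  next
    case 2 then show ?thesis using f W0_mid[of f k p] by auto
  next
    case 3
    then have "even f" using k by (auto split: if_splits)
    then show ?thesis using 3 f W0_f1[of f p] by simp
  next
    case 4
    then have ef: "even f" using k by (auto split: if_splits)
    define m where "m = k - f"
    have km: "k = f + m" "2 \<le> m" "m \<le> f" using 4 k ef by (auto simp: m_def)
    show ?thesis using W0_hi[of f m p] km f ef by auto
  qed
qed

lemma W1_vals:
  assumes f: "f > 1" and k: "1 \<le> k" "k < (if odd f then f else 2 * f)"
  shows "(W p f 1 k 0 = int p - 2 \<and> W p f 1 k 1 = int p - 3) \<or> (W p f 1 k 0 = 1 \<and> W p f 1 k 1 = 2)
    \<or> (W p f 1 k 0 = int p - 3 \<and> W p f 1 k 1 = int p - 4)"
proof -
  consider "k \<le> f - 1" | "k = f" | "f + 1 \<le> k" using k by linarith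
  then show ?thesis
  proof cases
    case 1 then show ?thesis using f k W1_lo[of f k p] by auto
  next
    case 2
    then have "even f" using k by (auto split: if_splits)
    then show ?thesis using 2 f W1_f[of f p] by simp
  next
    case 3
    then have ef: "even f" using k by (auto split: if_splits)
    define m where "m = k - f"
    have km: "k = f + m" "1 \<le> m" "m \<le> f - 1" using 3 k ef by (auto simp: m_def)
    show ?thesis using W1_hi[of f m p] km f ef by auto
  qed
qed

lemma W2_vals:
  assumes f: "f > 1" "even f" and k: "1 \<le> k" "k < 2 * f"
  shows "(W p f (2 mod f) k 0 = -1 \<and> W p f (2 mod f) k 1 = 0) \<or> (W p f (2 mod f) k 0 = int p - 1 \<and> W p f (2 mod f) k 1 = int p - 2)
    \<or> (W p f (2 mod f) k 0 = 0 \<and> W p f (2 mod f) k 1 = 1) \<or> (W p f (2 mod f) k 0 = int p - 2 \<and> W p f (2 mod f) k 1 = int p - 3)"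
proof (cases "f = 2")
  case True
  then show ?thesis using W0_vals[of f k p] f k by auto
next
  case False
  then have f3: "f \<ge> 3" using f by simp
  then have m2: "2 mod f = 2" by simp
  consider "k \<le> f - 2" | "f - 1 \<le> k" by linarith
  then show ?thesis
  proof cases
    case 1 then show ?thesis using W2_lo[of f k p] f3 m2 by auto
  next
    case 2
    define m where "m = k + 2 - f"
    have km: "k = f - 2 + m" "1 \<le> m" "m \<le> 2 * f" using 2 k f3 by (auto simp: m_def)
    have "W p f 2 k x = W p f 0 m x" for x using W2_hi[of f p m x] km f3 f by simp
    then show ?thesis using W0_vals[of f m p] km f m2 by auto
  qed
qed

lemma nonid:
  assumes f: "f > 1" and k: "1 \<le> d" "d < (if odd f then f else 2 * f)"
  shows "W p f 1 d \<noteq> id"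
  using W1_vals[OF assms, of p] by auto

lemma cross:
  assumes f: "f > 1" and k: "1 \<le> k" "k \<le> (if odd f then f else 2 * f)"
    and k': "1 \<le> k'" "k' < (if odd f then f else 2 * f)"
    and e0: "W p f 0 k = W p f 1 k'" and e1: "W p f 1 k = W p f (2 mod f) k'"
  shows False
proof -
  have a: "W p f 0 k 0 = W p f 1 k' 0" "W p f 0 k 1 = W p f 1 k' 1" using e0 by auto
  then have kf: "k = f + 1" using W0_vals[OF f k, of p] W1_vals[OF f k', of p] by auto
  then have ef: "even f" using k by (auto split: if_splits)
  have "W p f 1 k 0 = 1" "W p f 1 k 1 = 2" using W1_hi[of f 1 p] kf ef f by auto
  moreover have "W p f 1 k 0 = W p f (2 mod f) k' 0" "W p f 1 k 1 = W p f (2 mod f) k' 1" using e1 by auto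
  ultimately show False using W2_vals[OF f ef, of k' p] k' ef by auto
qed

lemma surj_mf: "surj (mf p i)"
  unfolding surj_def mf_def
proof
  fix y :: int
  show "\<exists>x. y = (if i = 0 then x - 1 else if i = 1 then int p - 2 - x else int p - 1 - x)"
    by (cases "i = 0"; cases "i = 1") (auto intro: exI[of _ "y + 1"] exI[of _ "int p - 2 - y"] exI[of _ "int p - 1 - y"])
qed

lemma surj_W: "surj (W p f j n)"
proof (induction n)
  case 0 show ?case by (simp only: W.simps surj_id)
next
  case (Suc n)
  have "surj (mf p ((j + n) mod f) \<circ> W p f j n)" by (rule comp_surj[OF Suc.IH surj_mf])
  then show ?case by (simp only: W.simps)
qed

lemma cancel_surj: "h \<circ> g = g \<Longrightarrow> surj g \<Longrightarrow> h = id"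
proof
  fix y assume a: "h \<circ> g = g" "surj g"
  obtain x where "y = g x" using a(2) by (auto simp: surj_def)
  then have "h y = (h \<circ> g) x" by simp
  also have "\<dots> = g x" using a(1) by simp
  finally show "h y = id y" using \<open>y = g x\<close> by simp
qed

lemma muk_poly: "f > 1 \<Longrightarrow> 1 \<le> k \<Longrightarrow> j < f \<Longrightarrow> poly (mu_k p f k ! j) = W p f j k"
  unfolding mu_k_def using poly_mu_pow[of f j p "k - 1"] by simp

lemma len_muk: "f > 1 \<Longrightarrow> length (mu_k p f k) = f"
  unfolding mu_k_def by (simp add: len_mu_pow)

lemma inj1:
  assumes f: "f > 1" and k: "1 \<le> k" "k < k'" "k' \<le> (if odd f then f else 2 * f)"
    and e: "mu_k p f k = mu_k p f k'"
  shows False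
proof -
  define d where "d = k' - k"
  have d: "1 \<le> d" "d < (if odd f then f else 2 * f)" "k' = k + d" using k by (auto simp: d_def split: if_splits)
  define j where "j = (f - k mod f + 1) mod f"
  have jf: "j < f" using f by (simp add: j_def)
  have jk: "(j + k) mod f = 1"
  proof -
    have "k mod f < f" using f by simp
    have "(j + k) mod f = ((f - k mod f + 1) + k) mod f" by (simp add: j_def mod_add_left_eq)
    also have "\<dots> = ((f - k mod f + 1) + k mod f) mod f" by (metis mod_add_right_eq)
    also have "(f - k mod f + 1) + k mod f = f + 1" using \<open>k mod f < f\<close> by simp
    finally show ?thesis using f by (simp add: mod_Suc)
  qed
  have "W p f j k' = W p f j k" using muk_poly[OF f _ jf, of k p] muk_poly[OF f _ jf, of k' p] e k by simp
  then have "W p f 1 d \<circ> W p f j k = W p f j k" using W_split[of p f j k d] d jk by simp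
  then have "W p f 1 d = id" using cancel_surj surj_W by blast
  then show False using nonid[OF f d(1,2)] by simp
qed

lemma cross2:
  assumes f: "f > 1" and k: "1 \<le> k" "k \<le> (if odd f then f else 2 * f)"
    and k': "1 \<le> k'" "k' < (if odd f then f else 2 * f)"
    and e: "mu_k p f k = gshift (mu_k p f k')"
  shows False
proof -
  have g: "gshift (mu_k p f k') ! j = mu_k p f k' ! (Suc j mod f)" if "j < f" for j
    using that nth_rotate1[of j "mu_k p f k'"] by (simp add: gshift_def len_muk[OF f])
  have "W p f 0 k = W p f 1 k'"
    using e g[of 0] muk_poly[OF f k(1), of 0 p] muk_poly[OF f k'(1), of 1 p] f by simp
  moreover have "W p f 1 k = W p f (2 mod f) k'"
    using e g[of 1] muk_poly[OF f k(1), of 1 p] muk_poly[OF f k'(1), of "2 mod f" p] f by (simp add: numeral_2_eq_2)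
  ultimately show False using cross[OF f k k'] by blast
qed

lemma pcomp_lin: "pcompose [:a, e:] [:b, d:] = [:a + e * b, e * d:]"
  by (simp add: pcompose_pCons)

definition goodp :: "int poly \<Rightarrow> bool" where
  "goodp q \<longleftrightarrow> (\<exists>a::int. q = [:a, 1:] \<or> q = [:a, -1:])"

lemma goodp_comp: "goodp q \<Longrightarrow> goodp r \<Longrightarrow> goodp (pcompose q r)"
  unfolding goodp_def by (auto simp: pcomp_lin)

lemma good_mu: "q \<in> set (mu p f) \<Longrightarrow> goodp q"
  unfolding mu_def goodp_def by auto

lemma good_mu_pow: "q \<in> set (mu_pow p f k) \<Longrightarrow> goodp q"
proof (induction k arbitrary: q)
  case 0 then show ?case by (simp add: good_mu)
next
  case (Suc k)
  then obtain a b where "q = pcompose a b" "a \<in> set ((gshift ^^ Suc k) (mu p f))" "b \<in> set (mu_pow p f k)"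
  proof -
    from Suc.prems obtain z where z: "z \<in> set (zip ((gshift ^^ Suc k) (mu p f)) (mu_pow p f k))" "q = case_prod pcompose z"
      unfolding mu_pow.simps tcomp_def by auto
    obtain a b where "z = (a, b)" by (cases z)
    then show ?thesis using z that by (auto dest: set_zip_leftD set_zip_rightD)
  qed
  then show ?case using Suc.IH good_mu goodp_comp by (simp add: gshift_pow del: rotate_Suc)
qed

theorem lemma2p2:
  fixes p f l :: nat
  assumes "prime p" and "f > 1"
    and "l = (if odd f then f else 2 * f)"
  shows "distinct (map (mu_k p f) [1..<l+1] @ map (\<lambda>k. gshift (mu_k p f k)) [1..<l])
    \<and> set (map (mu_k p f) [1..<l+1] @ map (\<lambda>k. gshift (mu_k p f k)) [1..<l]) \<subseteq> pm_tuples f"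
proof
  note f = assms(2)
  have I: "mu_k p f k \<noteq> mu_k p f k'" if "k \<in> {1..l}" "k' \<in> {1..l}" "k \<noteq> k'" for k k'
  proof
    assume e: "mu_k p f k = mu_k p f k'"
    show False
    proof (cases "k < k'")
      case True
      have "1 \<le> k" "k' \<le> (if odd f then f else 2 * f)" using that assms(3) by auto
      then show ?thesis using inj1[OF f, of k k' p] e True by blast
    next
      case False then have "k' < k" using that by simp
      moreover have "1 \<le> k'" "k \<le> (if odd f then f else 2 * f)" using that assms(3) by auto
      ultimately show ?thesis using inj1[OF f, of k' k p] e by metis
    qed
  qed
  have inj_a: "inj_on (mu_k p f) {1..<l+1}"
  proof (rule inj_onI)
    fix k k' assume "k \<in> {1..<l+1}" "k' \<in> {1..<l+1}" "mu_k p f k = mu_k p f k'"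
    then show "k = k'" using I[of k k'] by fastforce
  qed
  have inj_b: "inj_on (\<lambda>k. gshift (mu_k p f k)) {1..<l}"
  proof (rule inj_onI)
    fix k k' assume "k \<in> {1..<l}" "k' \<in> {1..<l}" "gshift (mu_k p f k) = gshift (mu_k p f k')"
    then have "mu_k p f k = mu_k p f k'" using inj_rotate1 unfolding gshift_def inj_def by blast
    then show "k = k'" using I[of k k'] \<open>k \<in> {1..<l}\<close> \<open>k' \<in> {1..<l}\<close> by fastforce
  qed
  have disj: "mu_k p f k \<noteq> gshift (mu_k p f k')" if "k \<in> {1..<l+1}" "k' \<in> {1..<l}" for k k'
  proof -
    have "1 \<le> k" "k \<le> (if odd f then f else 2 * f)" "1 \<le> k'" "k' < (if odd f then f else 2 * f)"
      using that assms(3) by auto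
    then show ?thesis using cross2[OF f, of k k' p] by blast
  qed
  show "distinct (map (mu_k p f) [1..<l+1] @ map (\<lambda>k. gshift (mu_k p f k)) [1..<l])"
    unfolding distinct_append distinct_map set_map set_upt
  proof (intro conjI)
    show "(mu_k p f ` {1..<l + 1}) \<inter> ((\<lambda>k. gshift (mu_k p f k)) ` {1..<l}) = {}"
    proof (rule equals0I)
      fix y assume "y \<in> (mu_k p f ` {1..<l + 1}) \<inter> ((\<lambda>k. gshift (mu_k p f k)) ` {1..<l})"
      then obtain k k' where "k \<in> {1..<l+1}" "k' \<in> {1..<l}" "y = mu_k p f k" "y = gshift (mu_k p f k')"
        by blast
      then show False using disj by metis
    qed
  qed (use inj_a inj_b in simp_all)
  have G: "mu_k p f k \<in> pm_tuples f" for k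
  proof -
    have "goodp q" if "q \<in> set (mu_k p f k)" for q using that good_mu_pow unfolding mu_k_def by blast
    then show ?thesis using len_muk[OF f] unfolding pm_tuples_def goodp_def by auto
  qed
  have G2: "gshift (mu_k p f k) \<in> pm_tuples f" for k
    using G[of k] unfolding pm_tuples_def gshift_def by simp
  show "set (map (mu_k p f) [1..<l+1] @ map (\<lambda>k. gshift (mu_k p f k)) [1..<l]) \<subseteq> pm_tuples f"
    using G G2 by auto
qed

end
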